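(* Let $\Gamma$ be a connected infinite graph whose vertices have uniformly bounded degree. Then $\Gamma$ admits a transitive translation-like action by $\mathbb{Z}$ if and only if $\Gamma$ has at most two ends.
   Context: $\Gamma$ is regarded as a metric space on its vertex set via the path-length metric. For a group $H$ and a metric space $(X,d)$, a right action $*$ of $H$ on $X$ is translation-like if it is free ($x*h=x$ implies $h=1_H$) and for every $h\in H$ the set $\{d(x,x*h): x\in X\}$ is bounded. The number of ends of a connected graph is the supremum, over finite sets $A$ of edges, of the number of infinite connected components of $\Gamma - A$. *)

theory Defs
  imports Main "HOL-Library.Extended_Nat"
begin

definition simple_graph :: "'a set \<Rightarrow> ('a \<Rightarrow> 'a \<Rightarrow> bool) \<Rightarrow> bool" where
  "simple_graph V E \<longleftrightarrow> (\<forall>x y. E x y \<longrightarrow> x \<in> V \<and> y \<in> V \<and> E y x \<and> x \<noteq> y)"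

definition graph_connected :: "'a set \<Rightarrow> ('a \<Rightarrow> 'a \<Rightarrow> bool) \<Rightarrow> bool" where
  "graph_connected V E \<longleftrightarrow> (\<forall>x\<in>V. \<forall>y\<in>V. E\<^sup>*\<^sup>* x y)"

definition bounded_degree :: "'a set \<Rightarrow> ('a \<Rightarrow> 'a \<Rightarrow> bool) \<Rightarrow> bool" where
  "bounded_degree V E \<longleftrightarrow> (\<exists>d::nat. \<forall>x\<in>V. finite {y. E x y} \<and> card {y. E x y} \<le> d)"

definition gdist :: "('a \<Rightarrow> 'a \<Rightarrow> bool) \<Rightarrow> 'a \<Rightarrow> 'a \<Rightarrow> nat" where
  "gdist E x y = (LEAST n. (E ^^ n) x y)"

definition int_right_action :: "'a set \<Rightarrow> ('a \<Rightarrow> int \<Rightarrow> 'a) \<Rightarrow> bool" where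
  "int_right_action V act \<longleftrightarrow>
     (\<forall>x\<in>V. \<forall>n. act x n \<in> V) \<and> (\<forall>x\<in>V. act x 0 = x) \<and>
     (\<forall>x\<in>V. \<forall>m n. act (act x m) n = act x (m + n))"

definition translation_like :: "'a set \<Rightarrow> ('a \<Rightarrow> 'a \<Rightarrow> bool) \<Rightarrow> ('a \<Rightarrow> int \<Rightarrow> 'a) \<Rightarrow> bool" where
  "translation_like V E act \<longleftrightarrow>
     int_right_action V act \<and>
     (\<forall>x\<in>V. \<forall>n. act x n = x \<longrightarrow> n = 0) \<and>
     (\<forall>n. \<exists>C::nat. \<forall>x\<in>V. gdist E x (act x n) \<le> C)"

definition transitive_action :: "'a set \<Rightarrow> ('a \<Rightarrow> int \<Rightarrow> 'a) \<Rightarrow> bool" where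
  "transitive_action V act \<longleftrightarrow> (\<forall>x\<in>V. \<forall>y\<in>V. \<exists>n. act x n = y)"

definition remove_edges :: "('a \<Rightarrow> 'a \<Rightarrow> bool) \<Rightarrow> ('a \<times> 'a) set \<Rightarrow> 'a \<Rightarrow> 'a \<Rightarrow> bool" where
  "remove_edges E A x y \<longleftrightarrow> E x y \<and> (x, y) \<notin> A \<and> (y, x) \<notin> A"

definition components :: "'a set \<Rightarrow> ('a \<Rightarrow> 'a \<Rightarrow> bool) \<Rightarrow> 'a set set" where
  "components V E = (\<lambda>x. {y. E\<^sup>*\<^sup>* x y}) ` V"

definition ecard :: "'b set \<Rightarrow> enat" where
  "ecard S = (if finite S then enat (card S) else \<infinity>)"

definition num_ends :: "'a set \<Rightarrow> ('a \<Rightarrow> 'a \<Rightarrow> bool) \<Rightarrow> enat" where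
  "num_ends V E = (SUP A \<in> {A. finite A \<and> (\<forall>(x,y)\<in>A. E x y)}.
      ecard {C \<in> components V (remove_edges E A). infinite C})"

end

theory Submission imports Defs "HOL-Library.Countable_Set" begin


locale grph =
  fixes V :: "'a set" and E :: "'a \<Rightarrow> 'a \<Rightarrow> bool"
  assumes sg: "simple_graph V E" and bd: "bounded_degree V E"
begin

lemma E_V: "E x y \<Longrightarrow> x \<in> V \<and> y \<in> V"
  using sg unfolding simple_graph_def by blast

lemma E_sym: "E x y \<Longrightarrow> E y x"
  using sg unfolding simple_graph_def by blast

lemma E_irr: "E x y \<Longrightarrow> x \<noteq> y"
  using sg unfolding simple_graph_def by blast

lemma nbr_fin: "finite {y. E x y}"
proof (cases "x \<in> V")
  case True then show ?thesis using bd unfolding bounded_degree_def by blast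
next
  case False then have "{y. E x y} = {}" using E_V by blast
  then show ?thesis by simp
qed

lemma nbrs_fin: "finite T \<Longrightarrow> finite {y. \<exists>t\<in>T. E t y}"
proof -
  assume "finite T"
  have "{y. \<exists>t\<in>T. E t y} = (\<Union>t\<in>T. {y. E t y})" by blast
  then show ?thesis using \<open>finite T\<close> nbr_fin by simp
qed

definition ER :: "'a set \<Rightarrow> 'a \<Rightarrow> 'a \<Rightarrow> bool" where
  "ER U x y \<longleftrightarrow> E x y \<and> x \<in> U \<and> y \<in> U"

definition conn :: "'a set \<Rightarrow> 'a \<Rightarrow> 'a \<Rightarrow> bool" where
  "conn U = (ER U)\<^sup>*\<^sup>*"

definition cls :: "'a set \<Rightarrow> 'a \<Rightarrow> 'a set" where
  "cls U x = {w. conn U x w}"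

lemma sym_rtranclp: "(\<And>x y. R x y \<Longrightarrow> R y x) \<Longrightarrow> R\<^sup>*\<^sup>* x y \<Longrightarrow> R\<^sup>*\<^sup>* y x"
proof -
  assume s: "\<And>x y. R x y \<Longrightarrow> R y x" and xy: "R\<^sup>*\<^sup>* x y"
  from xy show "R\<^sup>*\<^sup>* y x"
    by (induction rule: rtranclp_induct) (auto intro: converse_rtranclp_into_rtranclp s)
qed

lemma ER_sym: "ER U x y \<Longrightarrow> ER U y x"
  unfolding ER_def using E_sym by blast

lemma conn_sym: "conn U x y \<Longrightarrow> conn U y x"
  unfolding conn_def by (rule sym_rtranclp[OF ER_sym])

lemma conn_trans: "conn U x y \<Longrightarrow> conn U y z \<Longrightarrow> conn U x z"
  unfolding conn_def by auto

lemma conn_refl: "conn U x x"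
  unfolding conn_def by auto

lemma conn_edge: "E x y \<Longrightarrow> x \<in> U \<Longrightarrow> y \<in> U \<Longrightarrow> conn U x y"
  unfolding conn_def ER_def by auto

lemma conn_mono: "conn U x y \<Longrightarrow> U \<subseteq> U' \<Longrightarrow> conn U' x y"
  unfolding conn_def
proof -
  assume xy: "(ER U)\<^sup>*\<^sup>* x y" and UU: "U \<subseteq> U'"
  from xy show "(ER U')\<^sup>*\<^sup>* x y"
  proof (induction rule: rtranclp_induct)
    case base then show ?case by simp
  next
    case (step y z)
    then have "ER U' y z" using UU unfolding ER_def by auto
    then show ?case using step(3) by (rule rtranclp.rtrancl_into_rtrancl[rotated])
  qed
qed

lemma conn_in: "conn U x y \<Longrightarrow> x \<noteq> y \<Longrightarrow> x \<in> U \<and> y \<in> U"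
  unfolding conn_def
proof -
  assume "(ER U)\<^sup>*\<^sup>* x y" "x \<noteq> y"
  then show "x \<in> U \<and> y \<in> U"
    by (induction rule: rtranclp_induct) (auto simp: ER_def)
qed

lemma conn_in2: "conn U x y \<Longrightarrow> x \<in> U \<Longrightarrow> y \<in> U"
  using conn_in by blast

lemma restrict_gen:
  assumes "R\<^sup>*\<^sup>* a y" "\<And>w. R\<^sup>*\<^sup>* a w \<Longrightarrow> P w"
  shows "(\<lambda>x y. R x y \<and> P x \<and> P y)\<^sup>*\<^sup>* a y"
  using assms
proof (induction rule: rtranclp_induct)
  case base then show ?case by auto
next
  case (step w z)
  then have "P w" "P z" by (auto intro: rtranclp.rtrancl_into_rtrancl)
  with step show ?case by (auto intro: rtranclp.rtrancl_into_rtrancl)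
qed

lemma conn_restrict:
  assumes "conn U a y" "\<And>w. conn U a w \<Longrightarrow> w \<in> U'"
  shows "conn (U \<inter> U') a y"
proof -
  have "(\<lambda>x y. ER U x y \<and> x \<in> U' \<and> y \<in> U')\<^sup>*\<^sup>* a y"
    using restrict_gen[of "ER U" a y "\<lambda>w. w \<in> U'"] assms unfolding conn_def by blast
  moreover have "(\<lambda>x y. ER U x y \<and> x \<in> U' \<and> y \<in> U') = ER (U \<inter> U')"
    unfolding ER_def by auto
  ultimately show ?thesis unfolding conn_def by simp
qed

lemma conn_restrict2:
  assumes "conn U a y" "\<And>w. conn U a w \<Longrightarrow> w \<in> U'" "U' \<subseteq> U"
  shows "conn U' a y"
  using conn_restrict[OF assms(1,2)] assms(3) by (simp add: Int_absorb1)

lemma exit_gen: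
  assumes "R\<^sup>*\<^sup>* u b" "u \<notin> I" "b \<in> I"
  shows "\<exists>p q. (\<lambda>x y. R x y \<and> x \<notin> I \<and> y \<notin> I)\<^sup>*\<^sup>* u p \<and> R p q \<and> p \<notin> I \<and> q \<in> I"
  using assms
proof (induction rule: converse_rtranclp_induct)
  case base then show ?case by auto
next
  case (step u y)
  show ?case
  proof (cases "y \<in> I")
    case True then show ?thesis using step by blast
  next
    case False
    then obtain p q where pq: "(\<lambda>x y. R x y \<and> x \<notin> I \<and> y \<notin> I)\<^sup>*\<^sup>* y p" "R p q" "p \<notin> I" "q \<in> I"
      using step by blast
    have uy: "(\<lambda>x y. R x y \<and> x \<notin> I \<and> y \<notin> I) u y" using step False by auto
    have "(\<lambda>x y. R x y \<and> x \<notin> I \<and> y \<notin> I)\<^sup>*\<^sup>* u p"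
      by (rule converse_rtranclp_into_rtranclp[OF uy pq(1)])
    then show ?thesis using pq(2-4) by blast
  qed
qed

lemma conn_exit:
  assumes "conn U u b" "u \<notin> I" "b \<in> I"
  shows "\<exists>p q. conn (U - I) u p \<and> ER U p q \<and> p \<notin> I \<and> q \<in> I"
proof -
  have e: "(\<lambda>x y. ER U x y \<and> x \<notin> I \<and> y \<notin> I) = ER (U - I)" unfolding ER_def by auto
  show ?thesis using exit_gen[of "ER U" u b I] assms unfolding conn_def e by blast
qed

definition near :: "nat \<Rightarrow> 'a \<Rightarrow> 'a \<Rightarrow> bool" where
  "near k x y \<longleftrightarrow> (\<exists>n\<le>k. (E ^^ n) x y)"

lemma relpow_sym: "(E ^^ n) x y \<Longrightarrow> (E ^^ n) y x"
proof (induction n arbitrary: x y)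
  case 0 then show ?case by auto
next
  case (Suc n)
  then obtain z where "(E ^^ n) x z" "E z y" by (auto elim: relpowp_Suc_E)
  then show ?case using Suc relpowp_Suc_I2[of E y z n x] E_sym by blast
qed

lemma near_sym: "near k x y \<Longrightarrow> near k y x"
  unfolding near_def using relpow_sym by blast

lemma near_trans: "near a x y \<Longrightarrow> near b y z \<Longrightarrow> near (a + b) x z"
proof -
  assume "near a x y" "near b y z"
  then obtain m n where "m \<le> a" "(E ^^ m) x y" "n \<le> b" "(E ^^ n) y z" unfolding near_def by blast
  then show ?thesis unfolding near_def by (intro exI[of _ "m+n"]) (simp add: relpowp_trans)
qed

lemma near_mono: "near a x y \<Longrightarrow> a \<le> b \<Longrightarrow> near b x y"
proof -
  assume "near a x y" "a \<le> b"
  then obtain n where "n \<le> a" "(E ^^ n) x y" unfolding near_def by blast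
  then show ?thesis unfolding near_def using \<open>a \<le> b\<close> by (intro exI[of _ n]) simp
qed

lemma near_refl: "near k x x"
  unfolding near_def by (auto intro!: exI[of _ 0])

lemma near_edge: "E x y \<Longrightarrow> near 1 x y"
  unfolding near_def by (auto intro!: exI[of _ 1])

lemma layer_fin: "finite {y. (E ^^ n) x y}"
proof (induction n)
  case 0 then show ?case by simp
next
  case (Suc n)
  have "{y. (E ^^ Suc n) x y} = (\<Union>z\<in>{y. (E ^^ n) x y}. {y. E z y})"
    by (auto intro: relpowp_Suc_I elim: relpowp_Suc_E)
  then show ?case using Suc nbr_fin by simp
qed

lemma ball_fin: "finite {y. near k x y}"
proof -
  have "{y. near k x y} = (\<Union>n\<in>{..k}. {y. (E ^^ n) x y})" unfolding near_def by auto
  then show ?thesis using layer_fin by simp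
qed

end



context grph begin

definition connU :: "'a set \<Rightarrow> bool" where
  "connU U \<longleftrightarrow> (\<forall>a\<in>U. \<forall>b\<in>U. conn U a b)"

definition AT :: "'a set \<Rightarrow> ('a \<times> 'a) set" where
  "AT T = {(x,y). E x y \<and> (x \<in> T \<or> y \<in> T)}"

lemma AT_fin: "finite T \<Longrightarrow> finite (AT T)"
proof -
  assume f: "finite T"
  have "AT T \<subseteq> (\<Union>t\<in>T. {t} \<times> {y. E t y}) \<union> (\<Union>t\<in>T. {y. E t y} \<times> {t})"
    unfolding AT_def using E_sym by blast
  moreover have "finite ((\<Union>t\<in>T. {t} \<times> {y. E t y}) \<union> (\<Union>t\<in>T. {y. E t y} \<times> {t}))"
    using f nbr_fin by auto
  ultimately show ?thesis by (rule finite_subset)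
qed

lemma Er_conn:
  assumes "(remove_edges E (AT T))\<^sup>*\<^sup>* x y" "x \<notin> T"
  shows "y \<notin> T \<and> conn (V - T) x y"
  using assms
proof (induction rule: rtranclp_induct)
  case base then show ?case by (simp add: conn_refl)
next
  case (step w y)
  then have "E w y" "(w, y) \<notin> AT T" "w \<notin> T" unfolding remove_edges_def by auto
  then have "y \<notin> T" unfolding AT_def by auto
  moreover have "conn (V - T) w y" using E_V \<open>E w y\<close> \<open>w \<notin> T\<close> \<open>y \<notin> T\<close> by (auto intro!: conn_edge)
  ultimately show ?case using step conn_trans by blast
qed

lemma conn_Er:
  assumes "conn (V - T) x y"
  shows "(remove_edges E (AT T))\<^sup>*\<^sup>* x y"
  using assms unfolding conn_def
proof (induction rule: rtranclp_induct)
  case base then show ?case by simp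
next
  case (step w y)
  then have "remove_edges E (AT T) w y" unfolding ER_def remove_edges_def AT_def by auto
  then show ?case using step by (meson rtranclp.rtrancl_into_rtrancl)
qed

lemma ecard_le: "ecard S \<le> enat k \<Longrightarrow> finite S \<and> card S \<le> k"
  unfolding ecard_def by (auto split: if_splits)

lemma ends_set:
  assumes "finite T" "num_ends V E \<le> enat k"
  shows "finite {C \<in> components V (remove_edges E (AT T)). infinite C} \<and>
         card {C \<in> components V (remove_edges E (AT T)). infinite C} \<le> k"
proof -
  have "AT T \<in> {A. finite A \<and> (\<forall>(x,y)\<in>A. E x y)}" using AT_fin[OF assms(1)] unfolding AT_def by auto
  then have "ecard {C \<in> components V (remove_edges E (AT T)). infinite C} \<le> num_ends V E"
    unfolding num_ends_def by (rule SUP_upper)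
  then show ?thesis using assms(2) ecard_le by (meson order_trans)
qed

lemma ends_pts:
  assumes "finite T" "num_ends V E \<le> enat k" "P \<subseteq> V - T"
    "\<And>x. x \<in> P \<Longrightarrow> infinite (cls (V - T) x)"
    "\<And>x y. x \<in> P \<Longrightarrow> y \<in> P \<Longrightarrow> conn (V - T) x y \<Longrightarrow> x = y"
  shows "finite P \<and> card P \<le> k"
proof -
  define Er where "Er = remove_edges E (AT T)"
  define S where "S = {C \<in> components V Er. infinite C}"
  have S: "finite S" "card S \<le> k" using ends_set[OF assms(1,2)] unfolding S_def Er_def by auto
  define cE where "cE = (\<lambda>u. {w. Er\<^sup>*\<^sup>* u w})"
  have "cE ` P \<subseteq> S"
  proof
    fix C assume "C \<in> cE ` P"
    then obtain x where x: "x \<in> P" "C = cE x" by auto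
    have "cls (V - T) x \<subseteq> C" using x conn_Er unfolding cls_def cE_def Er_def by auto
    then have "infinite C" using assms(4)[OF x(1)] finite_subset by blast
    moreover have "C \<in> components V Er" using x assms(3) unfolding components_def cE_def by auto
    ultimately show "C \<in> S" unfolding S_def by auto
  qed
  moreover have "inj_on cE P"
  proof (rule inj_onI)
    fix x y assume "x \<in> P" "y \<in> P" "cE x = cE y"
    then have "y \<in> cE x" unfolding cE_def by auto
    then have "Er\<^sup>*\<^sup>* x y" unfolding cE_def by auto
    then have "conn (V - T) x y" using Er_conn \<open>x \<in> P\<close> assms(3) unfolding Er_def by blast
    then show "x = y" using assms(5) \<open>x \<in> P\<close> \<open>y \<in> P\<close> by blast
  qed
  ultimately show ?thesis using S
    by (metis card_image card_mono finite_imageD finite_subset le_trans)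
qed

lemma reach_nbr:
  assumes "connU U" "t0 \<in> U" "t0 \<in> T" "w \<in> U - T"
  shows "\<exists>y. y \<in> U - T \<and> (\<exists>t\<in>T. E t y) \<and> conn (U - T) y w"
proof -
  have "conn U w t0" using assms unfolding connU_def by blast
  from conn_exit[OF this, of T] assms obtain p q where
    pq: "conn (U - T) w p" "ER U p q" "p \<notin> T" "q \<in> T" by blast
  then have "p \<in> U" unfolding ER_def by auto
  then show ?thesis using pq E_sym conn_sym unfolding ER_def by blast
qed

lemma lemK:
  assumes "connU U" "infinite U" "finite T"
  shows "\<exists>z\<in>U - T. infinite (cls (U - T) z)"
proof (cases "U \<inter> T = {}")
  case True
  then have e: "U - T = U" by auto
  obtain z where "z \<in> U" using assms(2) by (metis finite.emptyI ex_in_conv)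
  have "U \<subseteq> cls U z" using assms(1) \<open>z \<in> U\<close> unfolding connU_def cls_def by auto
  then show ?thesis using e \<open>z \<in> U\<close> assms(2) finite_subset by metis
next
  case False
  then obtain t0 where t0: "t0 \<in> U" "t0 \<in> T" by auto
  define Y where "Y = {y. y \<in> U - T \<and> (\<exists>t\<in>T. E t y)}"
  have fY: "finite Y" using nbrs_fin[OF assms(3)] unfolding Y_def by (auto intro: finite_subset)
  have sub: "U - T \<subseteq> (\<Union>y\<in>Y. cls (U - T) y)"
  proof
    fix w assume "w \<in> U - T"
    then obtain y where "y \<in> U - T" "\<exists>t\<in>T. E t y" "conn (U - T) y w"
      using reach_nbr[OF assms(1) t0] by blast
    then show "w \<in> (\<Union>y\<in>Y. cls (U - T) y)" unfolding Y_def cls_def by auto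
  qed
  show ?thesis
  proof (rule ccontr)
    assume "\<not> ?thesis"
    then have "\<forall>y\<in>Y. finite (cls (U - T) y)" unfolding Y_def by auto
    then have "finite (U - T)" using fY sub by (meson finite_UN_I finite_subset)
    then show False using assms(2,3) by simp
  qed
qed

lemma cls_sub: assumes "x \<in> U" shows "cls U x \<subseteq> U"
  using assms conn_in2 unfolding cls_def by blast

lemma cls_conn:
  assumes "x \<in> U"
  shows "connU (cls U x)"
proof -
  have a: "conn (cls U x) x w" if "w \<in> cls U x" for w
  proof -
    have "conn U x w" using that unfolding cls_def by auto
    then show ?thesis
      by (rule conn_restrict2) (use assms conn_in2 in \<open>auto simp: cls_def\<close>)
  qed
  show ?thesis unfolding connU_def using a conn_sym conn_trans by blast
qed

definition oneend :: "'a set \<Rightarrow> bool" where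
  "oneend W \<longleftrightarrow> (\<forall>S x y. finite S \<longrightarrow> x \<in> W - S \<longrightarrow> y \<in> W - S \<longrightarrow>
     infinite (cls (W - S) x) \<longrightarrow> infinite (cls (W - S) y) \<longrightarrow> conn (W - S) x y)"

lemma oneend_V:
  assumes "num_ends V E \<le> enat 1"
  shows "oneend V"
  unfolding oneend_def
proof (intro allI impI)
  fix S x y assume a: "finite S" "x \<in> V - S" "y \<in> V - S"
    "infinite (cls (V - S) x)" "infinite (cls (V - S) y)"
  show "conn (V - S) x y"
  proof (rule ccontr)
    assume nc: "\<not> conn (V - S) x y"
    then have "x \<noteq> y" using conn_refl by metis
    have "finite {x,y} \<and> card {x,y} \<le> 1"
      apply (rule ends_pts[OF a(1) assms])
      using a nc conn_sym by auto
    then show False using \<open>x \<noteq> y\<close> by auto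
  qed
qed

end



context grph begin

lemma side_oneend:
  assumes ne: "num_ends V E \<le> enat 2"
    and part: "W1 \<union> W2 = V" "W1 \<inter> W2 = {}"
    and c2: "connU W2" and i2: "infinite W2"
    and fF: "finite F"
    and cross: "\<And>x y. x \<in> W1 \<Longrightarrow> y \<in> W2 \<Longrightarrow> E x y \<Longrightarrow> x \<in> F \<or> y \<in> F"
  shows "oneend W1"
  unfolding oneend_def
proof (intro allI impI)
  fix S x y assume a: "finite S" "x \<in> W1 - S" "y \<in> W1 - S"
    "infinite (cls (W1 - S) x)" "infinite (cls (W1 - S) y)"
  show "conn (W1 - S) x y"
  proof (rule ccontr)
    assume nc: "\<not> conn (W1 - S) x y"
    define T where "T = S \<union> F"
    have fT: "finite T" using a(1) fF unfolding T_def by auto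
    have stay: "q \<in> W1 \<and> conn (W1 - S) p q" if "conn (V - T) p q" "p \<in> W1" for p q
      using that(1) unfolding conn_def
    proof (induction rule: rtranclp_induct)
      case base then show ?case using that(2) by (simp add: conn_refl[unfolded conn_def])
    next
      case (step w q)
      then have w: "w \<in> W1" "E w q" "w \<notin> T" "q \<notin> T" "q \<in> V" unfolding ER_def by auto
      have "q \<notin> W2"
      proof
        assume "q \<in> W2"
        then have "w \<in> F \<or> q \<in> F" using cross w by blast
        then show False using w unfolding T_def by auto
      qed
      then have "q \<in> W1" using w part by auto
      moreover have "conn (W1 - S) w q" using w \<open>q \<in> W1\<close> unfolding T_def by (intro conn_edge) auto
      ultimately show ?case using step(3) conn_trans unfolding conn_def by blast
    qed
    define X where "X = cls (W1 - S) x"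
    define Y where "Y = cls (W1 - S) y"
    have cX: "connU X" "infinite X" using cls_conn a unfolding X_def by auto
    have cY: "connU Y" "infinite Y" using cls_conn a unfolding Y_def by auto
    obtain x' where x': "x' \<in> X - T" "infinite (cls (X - T) x')" using lemK[OF cX fT] by blast
    obtain y' where y': "y' \<in> Y - T" "infinite (cls (Y - T) y')" using lemK[OF cY fT] by blast
    obtain z' where z': "z' \<in> W2 - T" "infinite (cls (W2 - T) z')" using lemK[OF c2 i2 fT] by blast
    have XW: "X \<subseteq> W1 - S" "Y \<subseteq> W1 - S" unfolding X_def Y_def using cls_sub a by auto
    have inf: "infinite (cls (V - T) u)" if "u \<in> {x', y', z'}" for u
    proof -
      have "X - T \<subseteq> V - T" "Y - T \<subseteq> V - T" "W2 - T \<subseteq> V - T" using XW part by auto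
      then have "cls (X - T) x' \<subseteq> cls (V - T) x'" "cls (Y - T) y' \<subseteq> cls (V - T) y'"
        "cls (W2 - T) z' \<subseteq> cls (V - T) z'" unfolding cls_def using conn_mono by blast+
      then show ?thesis using that x' y' z' finite_subset by blast
    qed
    have xx: "conn (W1 - S) x x'" using x' unfolding X_def cls_def by auto
    have yy: "conn (W1 - S) y y'" using y' unfolding Y_def cls_def by auto
    have x'W: "x' \<in> W1" "y' \<in> W1" using x' y' XW by auto
    have n1: "\<not> conn (V - T) x' y'"
    proof
      assume "conn (V - T) x' y'"
      then have "conn (W1 - S) x' y'" using stay x'W by blast
      then have "conn (W1 - S) x y" using xx yy conn_trans conn_sym by blast
      then show False using nc by simp
    qed
    have n2: "\<not> conn (V - T) u z'" if "u \<in> {x', y'}" for u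
    proof
      assume "conn (V - T) u z'"
      then have "z' \<in> W1" using stay x'W that by blast
      then show False using z' part by auto
    qed
    have "finite {x', y', z'} \<and> card {x', y', z'} \<le> 2"
    proof (rule ends_pts[OF fT ne])
      show "{x', y', z'} \<subseteq> V - T" using x' y' z' XW part by auto
      show "\<And>u. u \<in> {x', y', z'} \<Longrightarrow> infinite (cls (V - T) u)" by (rule inf)
      show "\<And>u v. u \<in> {x', y', z'} \<Longrightarrow> v \<in> {x', y', z'} \<Longrightarrow> conn (V - T) u v \<Longrightarrow> u = v"
        using n1 n2 conn_sym by blast
    qed
    moreover have "x' \<noteq> y'" using n1 conn_refl by metis
    moreover have "x' \<noteq> z'" "y' \<noteq> z'" using n2 conn_refl by blast+
    ultimately show False by auto
  qed
qed

lemma Er_sym: "remove_edges E A x y \<Longrightarrow> remove_edges E A y x"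
  unfolding remove_edges_def using E_sym by blast

lemma ecard_two: "\<not> ecard S \<le> enat 1 \<Longrightarrow> \<exists>a b. a \<in> S \<and> b \<in> S \<and> a \<noteq> b"
proof (rule ccontr)
  assume "\<not> ecard S \<le> enat 1" "\<nexists>a b. a \<in> S \<and> b \<in> S \<and> a \<noteq> b"
  then have "S = {} \<or> (\<exists>a. S = {a})" by blast
  then have "ecard S \<le> enat 1" unfolding ecard_def by (auto simp: one_enat_def)
  then show False using \<open>\<not> ecard S \<le> enat 1\<close> by simp
qed

lemma two_sides:
  assumes gc: "graph_connected V E" and ne: "num_ends V E \<le> enat 2" and n1: "\<not> num_ends V E \<le> enat 1"
  shows "\<exists>W1 W2 s1 s2. W1 \<union> W2 = V \<and> W1 \<inter> W2 = {} \<and> connU W1 \<and> connU W2 \<and>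
     infinite W1 \<and> infinite W2 \<and> oneend W1 \<and> oneend W2 \<and> s1 \<in> W1 \<and> s2 \<in> W2 \<and> E s1 s2"
proof -
  obtain A where A: "finite A" "\<forall>(x,y)\<in>A. E x y"
    "\<not> ecard {C \<in> components V (remove_edges E A). infinite C} \<le> enat 1"
    using n1 unfolding num_ends_def by (auto simp: SUP_le_iff)
  define Er where "Er = remove_edges E A"
  define cE where "cE = (\<lambda>u. {w. Er\<^sup>*\<^sup>* u w})"
  obtain C1 C2 where C: "C1 \<in> components V Er" "C2 \<in> components V Er" "infinite C1" "infinite C2" "C1 \<noteq> C2"
    using ecard_two[OF A(3)] unfolding Er_def by blast
  obtain a b where ab: "a \<in> V" "b \<in> V" "C1 = cE a" "C2 = cE b"
    using C(1,2) unfolding components_def cE_def by auto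
  have Ersym: "Er x y \<Longrightarrow> Er y x" for x y unfolding Er_def by (rule Er_sym)
  have cE_eq: "cE u = cE w" if "Er\<^sup>*\<^sup>* u w" for u w
  proof -
    have "Er\<^sup>*\<^sup>* w u" using sym_rtranclp[OF Ersym that] .
    then show ?thesis unfolding cE_def using that by (auto intro: rtranclp_trans)
  qed
  have cEV: "cE u \<subseteq> V" if "u \<in> V" for u
  proof
    fix w assume "w \<in> cE u"
    then have "Er\<^sup>*\<^sup>* u w" unfolding cE_def by auto
    then show "w \<in> V" using that
      by (induction rule: rtranclp_induct) (auto simp: Er_def remove_edges_def dest: E_V)
  qed
  define I1 where "I1 = cE a"
  define I2 where "I2 = cE b"
  have disj: "I1 \<inter> I2 = {}"
  proof (rule ccontr)
    assume "I1 \<inter> I2 \<noteq> {}"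
    then obtain w where "Er\<^sup>*\<^sup>* a w" "Er\<^sup>*\<^sup>* b w" unfolding I1_def I2_def cE_def by auto
    then have "cE a = cE w" "cE b = cE w" using cE_eq by auto
    then show False using C(5) ab by simp
  qed
  have aI1: "a \<in> I1" unfolding I1_def cE_def by simp
  have bI2: "b \<in> I2" unfolding I2_def cE_def by simp
  have Er_conn: "conn U u w" if "Er\<^sup>*\<^sup>* u w" "cE u \<subseteq> U" for u w U
  proof -
    have "(\<lambda>x y. Er x y \<and> x \<in> U \<and> y \<in> U)\<^sup>*\<^sup>* u w"
      using restrict_gen[of Er u w "\<lambda>w. w \<in> U"] that unfolding cE_def by blast
    then show ?thesis unfolding conn_def
      by (rule mono_rtranclp[rule_format, rotated]) (auto simp: ER_def Er_def remove_edges_def)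
  qed
  define W1 where "W1 = cls (V - I2) a"
  define W2 where "W2 = V - W1"
  have aV: "a \<in> V - I2" using aI1 disj ab by auto
  have W1s: "W1 \<subseteq> V - I2" unfolding W1_def by (rule cls_sub[OF aV])
  have I1W1: "I1 \<subseteq> W1"
  proof
    fix w assume "w \<in> I1"
    then have "Er\<^sup>*\<^sup>* a w" unfolding I1_def cE_def by auto
    moreover have "cE a \<subseteq> V - I2" using cEV[OF ab(1)] disj unfolding I1_def by auto
    ultimately show "w \<in> W1" unfolding W1_def cls_def using Er_conn by blast
  qed
  have I2W2: "I2 \<subseteq> W2" unfolding W2_def using W1s cEV[OF ab(2)] unfolding I2_def by auto
  have cross: "(x,y) \<in> A \<or> (y,x) \<in> A" if "x \<in> W1" "y \<in> W2" "E x y" for x y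
  proof (rule ccontr)
    assume nA: "\<not> ?thesis"
    have "y \<in> V" using that E_V by auto
    have "y \<in> I2"
    proof (rule ccontr)
      assume "y \<notin> I2"
      then have "conn (V - I2) x y" using that W1s \<open>y \<in> V\<close> by (intro conn_edge) auto
      then have "y \<in> W1" using that(1) unfolding W1_def cls_def using conn_trans by blast
      then show False using that(2) unfolding W2_def by auto
    qed
    have "Er y x" using nA that(3) E_sym unfolding Er_def remove_edges_def by auto
    then have "x \<in> I2" using \<open>y \<in> I2\<close> unfolding I2_def cE_def by (auto intro: rtranclp.rtrancl_into_rtrancl)
    then show False using that(1) W1s by auto
  qed
  have cW1: "connU W1" unfolding W1_def by (rule cls_conn[OF aV])
  have cW2b: "conn W2 b u" if "u \<in> W2" for u
  proof (cases "u \<in> I2")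
    case True
    then have "Er\<^sup>*\<^sup>* b u" unfolding I2_def cE_def by auto
    then show ?thesis using Er_conn I2W2 unfolding I2_def by blast
  next
    case False
    have uV: "u \<in> V" "u \<notin> W1" using that unfolding W2_def by auto
    have "E\<^sup>*\<^sup>* u b" using gc uV ab unfolding graph_connected_def by auto
    then have "conn V u b" unfolding conn_def
      by (rule mono_rtranclp[rule_format, rotated]) (auto simp: ER_def dest: E_V)
    from conn_exit[OF this False bI2] obtain p q where
      pq: "conn (V - I2) u p" "ER V p q" "p \<notin> I2" "q \<in> I2" by blast
    have KW: "w \<in> W2" if "conn (V - I2) u w" for w
    proof -
      have "w \<in> V" using that uV conn_in by (cases "u = w") auto
      moreover have "w \<notin> W1"
      proof
        assume "w \<in> W1"
        then have "conn (V - I2) a u" using that conn_sym conn_trans unfolding W1_def cls_def by blast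
        then show False using uV unfolding W1_def cls_def by auto
      qed
      ultimately show ?thesis unfolding W2_def by auto
    qed
    have "conn ((V - I2) \<inter> W2) u p" by (rule conn_restrict[OF pq(1) KW])
    then have "conn W2 u p" by (rule conn_mono) auto
    moreover have "conn W2 p q" using pq KW I2W2 unfolding ER_def by (intro conn_edge) auto
    moreover have "conn W2 b q"
    proof -
      have "Er\<^sup>*\<^sup>* b q" using pq(4) unfolding I2_def cE_def by auto
      then show ?thesis using Er_conn I2W2 unfolding I2_def by blast
    qed
    ultimately show ?thesis using conn_trans conn_sym by blast
  qed
  have cW2: "connU W2" unfolding connU_def using cW2b conn_sym conn_trans by blast
  have inf1: "infinite W1" using I1W1 C(3) ab unfolding I1_def using finite_subset by blast
  have inf2: "infinite W2" using I2W2 C(4) ab unfolding I2_def using finite_subset by blast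
  have part: "W1 \<union> W2 = V" "W1 \<inter> W2 = {}" using W1s unfolding W2_def by auto
  define F where "F = fst ` A \<union> snd ` A"
  have fF: "finite F" using A(1) unfolding F_def by auto
  have cr1: "x \<in> F \<or> y \<in> F" if "x \<in> W1" "y \<in> W2" "E x y" for x y
    using cross[OF that] unfolding F_def by force
  have cr2: "x \<in> F \<or> y \<in> F" if "x \<in> W2" "y \<in> W1" "E x y" for x y
    using cr1[OF that(2,1) E_sym[OF that(3)]] by blast
  have o1: "oneend W1" by (rule side_oneend[OF ne part cW2 inf2 fF cr1])
  have o2: "oneend W2" by (rule side_oneend[OF ne _ _ cW1 inf1 fF cr2]) (use part in auto)
  have "a \<in> W1" using aI1 I1W1 by auto
  have "b \<in> W2" using bI2 I2W2 by auto
  have "E\<^sup>*\<^sup>* a b" using gc ab unfolding graph_connected_def by auto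
  then have "conn V a b" unfolding conn_def
    by (rule mono_rtranclp[rule_format, rotated]) (auto simp: ER_def dest: E_V)
  from conn_exit[OF this, of W2] \<open>a \<in> W1\<close> \<open>b \<in> W2\<close> part obtain p q where
    pq: "ER V p q" "p \<notin> W2" "q \<in> W2" by auto
  then have "p \<in> W1" "E p q" using part unfolding ER_def by auto
  then show ?thesis using part cW1 cW2 inf1 inf2 o1 o2 pq
    by (intro exI[of _ W1] exI[of _ W2] exI[of _ p] exI[of _ q]) simp
qed

end



context grph begin

lemma fin_ham:
  assumes "finite P" "t \<in> P" "\<forall>w\<in>P. conn P t w"
  shows "\<exists>L. distinct L \<and> set L = P \<and> hd L = t \<and> (last L = t \<or> E (last L) t) \<and> successively (near 3) L"
  using assms
proof (induction "card P" arbitrary: P t rule: less_induct)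
  case less
  show ?case
  proof (cases "P = {t}")
    case True
    then show ?thesis by (intro exI[of _ "[t]"]) simp
  next
    case False
    then obtain w where w: "w \<in> P" "w \<noteq> t" using less.prems by auto
    have "conn P t w" using less.prems w by auto
    from conn_exit[OF this, of "P - {t}"] w obtain p q where
      pq: "conn (P - (P - {t})) t p" "ER P p q" "p \<notin> P - {t}" "q \<in> P - {t}" by auto
    have "p = t" using pq unfolding ER_def by auto
    define c where "c = q"
    have c: "E t c" "c \<in> P" "c \<noteq> t" using pq \<open>p = t\<close> unfolding c_def ER_def by auto
    define C where "C = cls (P - {t}) c"
    define P' where "P' = P - C"
    have CP: "C \<subseteq> P - {t}" unfolding C_def by (rule cls_sub) (use c in auto)
    have cC: "c \<in> C" unfolding C_def cls_def by (simp add: conn_refl)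
    have tP': "t \<in> P'" using CP less.prems unfolding P'_def by auto
    have fC: "finite C" using CP less.prems(1) finite_subset by blast
    have fP': "finite P'" using less.prems(1) unfolding P'_def by auto
    have cardC: "card C < card P" using CP less.prems by (intro psubset_card_mono) auto
    have cardP': "card P' < card P" using cC c less.prems unfolding P'_def
      by (intro psubset_card_mono) auto
    have connC: "\<forall>w\<in>C. conn C c w" using cls_conn[of c "P - {t}"] c cC unfolding C_def connU_def by auto
    have Cclos: "y \<in> C" if "x \<in> C" "E x y" "y \<in> P" "y \<noteq> t" for x y
    proof -
      have "conn (P - {t}) x y" using that CP by (intro conn_edge) auto
      then show ?thesis using that(1) unfolding C_def cls_def using conn_trans by blast
    qed
    have key: "(x \<in> P' \<longrightarrow> conn P' x w) \<and> (x \<in> C \<longrightarrow> conn P' t w)"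
      if xw: "(ER P)\<^sup>*\<^sup>* x w" and wP: "w \<in> P'" for x w
      using xw
    proof (induction rule: converse_rtranclp_induct)
      case base then show ?case using wP unfolding P'_def by (auto simp: conn_refl)
    next
      case (step x y)
      have xy: "E x y" "x \<in> P" "y \<in> P" using step(1) unfolding ER_def by auto
      show ?case
      proof (intro conjI impI)
        assume "x \<in> P'"
        show "conn P' x w"
        proof (cases "y \<in> C")
          case True
          have "x = t"
          proof (rule ccontr)
            assume "x \<noteq> t"
            then have "x \<in> C" using Cclos[OF True E_sym[OF xy(1)] xy(2)] by auto
            then show False using \<open>x \<in> P'\<close> unfolding P'_def by auto
          qed
          then show ?thesis using step(3) True by (auto simp: conn_def)
        next
          case False
          then have "conn P' x y" using xy \<open>x \<in> P'\<close> unfolding P'_def by (intro conn_edge) auto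
          moreover have "y \<in> P'" using False xy unfolding P'_def by auto
          ultimately show ?thesis using step(3) conn_trans by blast
        qed
      next
        assume "x \<in> C"
        show "conn P' t w"
        proof (cases "y \<in> C")
          case True then show ?thesis using step(3) by (auto simp: conn_def)
        next
          case False
          then have "y = t" using Cclos[OF \<open>x \<in> C\<close> xy(1) xy(3)] by auto
          then show ?thesis using step(3) tP' by (auto simp: conn_def)
        qed
      qed
    qed
    have connP': "\<forall>w\<in>P'. conn P' t w"
    proof
      fix w assume "w \<in> P'"
      then have "conn P t w" using less.prems unfolding P'_def by auto
      then show "conn P' t w" using key[of t w] \<open>w \<in> P'\<close> tP' unfolding conn_def by auto
    qed
    obtain L1 where L1: "distinct L1" "set L1 = P'" "hd L1 = t" "last L1 = t \<or> E (last L1) t"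
      "successively (near 3) L1" using less.hyps[OF cardP' fP' tP' connP'] by blast
    obtain L2 where L2: "distinct L2" "set L2 = C" "hd L2 = c" "last L2 = c \<or> E (last L2) c"
      "successively (near 3) L2" using less.hyps[OF cardC fC cC connC] by blast
    have ne: "L1 \<noteq> []" "L2 \<noteq> []" using L1(2) L2(2) tP' cC by auto
    define L where "L = L1 @ rev L2"
    have "distinct L" using L1 L2 unfolding L_def P'_def by auto
    moreover have "set L = P" using L1 L2 CP unfolding L_def P'_def by auto
    moreover have "hd L = t" using L1 ne unfolding L_def by auto
    moreover have "last L = t \<or> E (last L) t" using L2 ne c E_sym unfolding L_def by (auto simp: last_rev)
    moreover have "successively (near 3) L"
    proof -
      have a: "near 1 (last L1) t" using L1(4) near_refl near_edge by metis
      have b: "near 1 t c" using c near_edge by auto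
      have d: "near 1 c (last L2)" using L2(4) near_refl near_edge near_sym by metis
      have "near (1 + 1 + 1) (last L1) (last L2)" using near_trans[OF near_trans[OF a b] d] .
      then have "near 3 (last L1) (hd (rev L2))" using ne by (simp add: hd_rev numeral_3_eq_3)
      moreover have "successively (near 3) (rev L2)"
        using L2(5) by (simp add: successively_mono near_sym)
      ultimately show ?thesis using L1(5) ne unfolding L_def by (simp add: successively_append_iff)
    qed
    ultimately show ?thesis by blast
  qed
qed

lemma progG:
  assumes J: "J = cls (U - {t}) z" "z \<in> U - {t}" and v: "v \<in> J"
  shows "((ER U) ^^ n) x v \<Longrightarrow> (x \<in> J \<and> (\<exists>m\<le>n. ((ER J) ^^ m) x v)) \<or>
         (\<exists>t' m. m < n \<and> E t t' \<and> t' \<in> J \<and> ((ER J) ^^ m) t' v)"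
proof (induction n arbitrary: x)
  case 0
  then show ?case using v by (auto intro!: exI[of _ 0])
next
  case (Suc n)
  obtain u where u: "ER U x u" "((ER U) ^^ n) u v" using relpowp_Suc_D2[OF Suc.prems] by blast
  have JU: "J \<subseteq> U - {t}" unfolding J by (rule cls_sub[OF J(2)])
  from Suc.IH[OF u(2)] show ?case
  proof
    assume a: "u \<in> J \<and> (\<exists>m\<le>n. ((ER J) ^^ m) u v)"
    then obtain m where m: "m \<le> n" "((ER J) ^^ m) u v" by blast
    show ?thesis
    proof (cases "x \<in> J")
      case True
      then have "ER J x u" using u a unfolding ER_def by auto
      then have "((ER J) ^^ Suc m) x v" using m(2) by (rule relpowp_Suc_I2)
      then show ?thesis using True m by (intro disjI1 conjI exI[of _ "Suc m"]) auto
    next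
      case False
      have "x = t"
      proof (rule ccontr)
        assume "x \<noteq> t"
        then have "conn (U - {t}) u x" using u a JU unfolding ER_def by (intro conn_edge) (auto dest: E_sym)
        then have "x \<in> J" using a unfolding J cls_def using conn_trans by blast
        then show False using False by simp
      qed
      then show ?thesis using u a m unfolding ER_def by (intro disjI2 exI[of _ u] exI[of _ m]) auto
    qed
  next
    assume "\<exists>t' m. m < n \<and> E t t' \<and> t' \<in> J \<and> ((ER J) ^^ m) t' v"
    then show ?thesis using less_SucI by blast
  qed
qed

end

locale ray = grph +
  fixes W :: "'a set"
  assumes WV: "W \<subseteq> V" and Wc: "connU W" and Wi: "infinite W" and Wo: "oneend W"
begin

definition dist :: "'a set \<Rightarrow> 'a \<Rightarrow> 'a \<Rightarrow> nat" where
  "dist U x y = (LEAST n. ((ER U) ^^ n) x y)"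

lemma W_count: "countable W"
proof -
  obtain s where s: "s \<in> W" using Wi by (metis ex_in_conv finite.emptyI)
  have "W \<subseteq> (\<Union>n. {y. (E ^^ n) s y})"
  proof
    fix w assume "w \<in> W"
    then have "conn W s w" using Wc s unfolding connU_def by auto
    then have "E\<^sup>*\<^sup>* s w" unfolding conn_def
      by (rule mono_rtranclp[rule_format, rotated]) (auto simp: ER_def)
    then show "w \<in> (\<Union>n. {y. (E ^^ n) s y})" by (auto simp: rtranclp_power)
  qed
  moreover have "countable (\<Union>n. {y. (E ^^ n) s y})"
    using layer_fin by (auto intro: countable_finite)
  ultimately show ?thesis by (rule countable_subset)
qed

definition en :: "nat \<Rightarrow> 'a" where "en = from_nat_into W"

lemma en_range: "range en = W"
  unfolding en_def using W_count Wi by (intro range_from_nat_into) auto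

definition tgt :: "'a set \<Rightarrow> 'a" where "tgt D = en (LEAST i. en i \<notin> D)"

definition Inv :: "'a set \<Rightarrow> 'a \<Rightarrow> bool" where
  "Inv D t \<longleftrightarrow> finite D \<and> D \<subseteq> W \<and> t \<in> W - D \<and> connU (W - D)"

definition Prp :: "'a set \<Rightarrow> 'a \<Rightarrow> 'a set \<Rightarrow> 'a \<Rightarrow> bool" where
  "Prp D t P t' \<longleftrightarrow> finite P \<and> t \<in> P \<and> P \<subseteq> W - D \<and> (\<forall>w\<in>P. conn P t w) \<and>
     t' \<in> W - D - P \<and> E t t' \<and> connU (W - (D \<union> P)) \<and>
     (tgt D \<notin> P \<longrightarrow> dist (W - (D \<union> P)) t' (tgt D) < dist (W - D) t (tgt D))"

lemma tgt_in: assumes "t \<in> W - D" shows "tgt D \<in> W - D"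
proof -
  obtain i where "en i = t" using en_range assms by (metis DiffD1 rangeE)
  then have "en i \<notin> D" using assms by auto
  then have "en (LEAST i. en i \<notin> D) \<notin> D" by (rule LeastI)
  moreover have "en (LEAST i. en i \<notin> D) \<in> W" using en_range by auto
  ultimately show ?thesis unfolding tgt_def by auto
qed

lemma step:
  assumes "Inv D t"
  shows "\<exists>P t'. Prp D t P t'"
proof -
  define W' where "W' = W - D"
  have inv: "finite D" "D \<subseteq> W" "t \<in> W'" "connU W'" using assms unfolding Inv_def W'_def by auto
  have iW': "infinite W'" using Wi inv(1) unfolding W'_def by auto
  obtain z where z: "z \<in> W' - {t}" "infinite (cls (W' - {t}) z)"
    using lemK[OF inv(4) iW', of "{t}"] by auto
  define J where "J = cls (W' - {t}) z"
  have JW: "J \<subseteq> W' - {t}" unfolding J_def by (rule cls_sub[OF z(1)])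
  have eq: "W - insert t D = W' - {t}" unfolding W'_def by auto
  have uniq: "conn (W' - {t}) z y" if "y \<in> W' - {t}" "infinite (cls (W' - {t}) y)" for y
    using Wo inv(1) z that unfolding oneend_def eq[symmetric] by (metis finite_insert)
  define P where "P = W' - J"
  have tP: "t \<in> P" using inv JW unfolding P_def by auto
  have PW: "P \<subseteq> W - D" unfolding P_def W'_def by auto
  have nbr: "\<exists>y. y \<in> W' - {t} \<and> E t y \<and> conn (W' - {t}) y w \<and> finite (cls (W' - {t}) y) \<and> y \<in> P"
    if "w \<in> P" "w \<noteq> t" for w
  proof -
    have "w \<in> W' - {t}" using that unfolding P_def by auto
    then obtain y where y: "y \<in> W' - {t}" "E t y" "conn (W' - {t}) y w"
      using reach_nbr[OF inv(4) inv(3), of "{t}" w] by auto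
    have "y \<notin> J"
    proof
      assume "y \<in> J"
      then have "w \<in> J" using y(3) conn_trans unfolding J_def cls_def by blast
      then show False using that unfolding P_def by auto
    qed
    then have "finite (cls (W' - {t}) y)" using uniq y(1) unfolding J_def cls_def by blast
    then show ?thesis using y \<open>y \<notin> J\<close> unfolding P_def by auto
  qed
  have fP: "finite P"
  proof -
    define Y where "Y = {y. E t y \<and> finite (cls (W' - {t}) y)}"
    have fY: "finite Y" unfolding Y_def using nbr_fin by (auto intro: finite_subset)
    have "P \<subseteq> insert t (\<Union>y\<in>Y. cls (W' - {t}) y)"
    proof
      fix w assume "w \<in> P"
      show "w \<in> insert t (\<Union>y\<in>Y. cls (W' - {t}) y)"
      proof (cases "w = t")
        case False
        then show ?thesis using nbr[OF \<open>w \<in> P\<close>] unfolding Y_def cls_def by blast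
      qed simp
    qed
    moreover have "finite (insert t (\<Union>y\<in>Y. cls (W' - {t}) y))" using fY unfolding Y_def by auto
    ultimately show ?thesis by (rule finite_subset)
  qed
  have Pconn: "\<forall>w\<in>P. conn P t w"
  proof
    fix w assume "w \<in> P"
    show "conn P t w"
    proof (cases "w = t")
      case True then show ?thesis by (simp add: conn_refl)
    next
      case False
      obtain y where y: "y \<in> W' - {t}" "E t y" "conn (W' - {t}) y w" "y \<in> P"
        using nbr[OF \<open>w \<in> P\<close> False] by blast
      have inP: "v \<in> P" if "conn (W' - {t}) y v" for v
      proof -
        have "v \<in> W'" using that y(1) conn_in by (cases "y = v") auto
        moreover have "v \<notin> J"
        proof
          assume "v \<in> J"
          then have "conn (W' - {t}) z y" using that conn_sym conn_trans unfolding J_def cls_def by blast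
          then show False using y(4) unfolding P_def J_def cls_def by auto
        qed
        ultimately show ?thesis unfolding P_def by auto
      qed
      have "conn ((W' - {t}) \<inter> P) y w" by (rule conn_restrict[OF y(3) inP])
      then have "conn P y w" by (rule conn_mono) auto
      moreover have "conn P t y" using y tP by (intro conn_edge) auto
      ultimately show ?thesis using conn_trans by blast
    qed
  qed
  define v0 where "v0 = (if tgt D \<in> J then tgt D else z)"
  have v0J: "v0 \<in> J" unfolding v0_def J_def cls_def by (auto simp: conn_refl)
  have "conn W' t v0" using inv(3,4) v0J JW unfolding connU_def by auto
  then obtain n where "((ER W') ^^ n) t v0" unfolding conn_def by (auto simp: rtranclp_power)
  then have n0: "((ER W') ^^ dist W' t v0) t v0" unfolding dist_def by (rule LeastI)
  from progG[OF J_def z(1) v0J n0] JW obtain t' m where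
    tm: "m < dist W' t v0" "E t t'" "t' \<in> J" "((ER J) ^^ m) t' v0" by auto
  have WDP: "W - (D \<union> P) = J" using JW unfolding P_def W'_def by auto
  have "t' \<in> W - D - P" using WDP tm by auto
  moreover have "connU (W - (D \<union> P))" unfolding WDP J_def by (rule cls_conn[OF z(1)])
  moreover have "tgt D \<notin> P \<longrightarrow> dist (W - (D \<union> P)) t' (tgt D) < dist (W - D) t (tgt D)"
  proof
    assume "tgt D \<notin> P"
    moreover have "tgt D \<in> W'" using tgt_in inv(3) unfolding W'_def by auto
    ultimately have "tgt D \<in> J" unfolding P_def by auto
    then have "v0 = tgt D" unfolding v0_def by auto
    have "dist J t' v0 \<le> m" unfolding dist_def by (rule Least_le) (rule tm(4))
    then show "dist (W - (D \<union> P)) t' (tgt D) < dist (W - D) t (tgt D)"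
      using tm(1) WDP \<open>v0 = tgt D\<close> unfolding W'_def by auto
  qed
  ultimately have "Prp D t P t'" unfolding Prp_def using fP tP PW Pconn tm(2) by auto
  then show ?thesis by blast
qed

end



context ray begin

definition pc :: "'a set \<times> 'a \<Rightarrow> 'a set \<times> 'a" where
  "pc st = (SOME pt. Prp (fst st) (snd st) (fst pt) (snd pt))"

primrec sq :: "'a \<Rightarrow> nat \<Rightarrow> 'a set \<times> 'a" where
  "sq s 0 = ({}, s)"
| "sq s (Suc k) = (fst (sq s k) \<union> fst (pc (sq s k)), snd (pc (sq s k)))"

context
  fixes s assumes sW: "s \<in> W"
begin

abbreviation "DD k \<equiv> fst (sq s k)"
abbreviation "tt k \<equiv> snd (sq s k)"
abbreviation "PP k \<equiv> fst (pc (sq s k))"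

lemma inv_prp: "Inv (DD k) (tt k) \<and> Prp (DD k) (tt k) (PP k) (tt (Suc k))"
proof (induction k)
  case 0
  have "Inv (DD 0) (tt 0)" using sW Wc unfolding Inv_def by auto
  moreover have "Prp (DD 0) (tt 0) (PP 0) (tt (Suc 0))"
  proof -
    obtain P t' where "Prp (DD 0) (tt 0) P t'" using step[OF \<open>Inv (DD 0) (tt 0)\<close>] by blast
    then have "\<exists>pt. Prp (fst (sq s 0)) (snd (sq s 0)) (fst pt) (snd pt)" by (intro exI[of _ "(P,t')"]) simp
    then have "Prp (fst (sq s 0)) (snd (sq s 0)) (fst (pc (sq s 0))) (snd (pc (sq s 0)))"
      unfolding pc_def by (rule someI_ex)
    then show ?thesis by simp
  qed
  ultimately show ?case by simp
next
  case (Suc k)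
  have "Inv (DD (Suc k)) (tt (Suc k))" using Suc unfolding Inv_def Prp_def by auto
  moreover have "Prp (DD (Suc k)) (tt (Suc k)) (PP (Suc k)) (tt (Suc (Suc k)))"
  proof -
    obtain P t' where "Prp (DD (Suc k)) (tt (Suc k)) P t'" using step[OF \<open>Inv (DD (Suc k)) (tt (Suc k))\<close>] by blast
    then have "\<exists>pt. Prp (fst (sq s (Suc k))) (snd (sq s (Suc k))) (fst pt) (snd pt)" by (intro exI[of _ "(P,t')"]) simp
    then have "Prp (fst (sq s (Suc k))) (snd (sq s (Suc k))) (fst (pc (sq s (Suc k)))) (snd (pc (sq s (Suc k))))"
      unfolding pc_def by (rule someI_ex)
    then show ?thesis by simp
  qed
  ultimately show ?case by simp
qed

lemma DD_Suc: "DD (Suc k) = DD k \<union> PP k" by simp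

lemma DD_mono: "k \<le> k' \<Longrightarrow> DD k \<subseteq> DD k'"
proof (induction k' rule: dec_induct)
  case base then show ?case by simp
next
  case (step n) then show ?case by auto
qed

lemma cover: "w \<in> W \<Longrightarrow> \<exists>k. w \<in> DD k"
proof (rule ccontr)
  assume wW: "w \<in> W" and nw: "\<nexists>k. w \<in> DD k"
  obtain j where j: "en j = w" using en_range wW by (metis rangeE)
  define \<iota> where "\<iota> k = (LEAST i. en i \<notin> DD k)" for k
  have ex: "en j \<notin> DD k" for k using nw j by auto
  have \<iota>j: "\<iota> k \<le> j" for k unfolding \<iota>_def by (rule Least_le) (rule ex)
  have \<iota>in: "en (\<iota> k) \<notin> DD k" for k unfolding \<iota>_def by (rule LeastI) (rule ex)
  have \<iota>mono: "\<iota> k \<le> \<iota> k'" if "k \<le> k'" for k k'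
  proof -
    have "en (\<iota> k') \<notin> DD k" using \<iota>in[of k'] DD_mono[OF that] by auto
    then show ?thesis unfolding \<iota>_def[of k] by (rule Least_le)
  qed
  have fin: "finite (range \<iota>)" using \<iota>j by (auto intro: finite_subset[of _ "{..j}"])
  obtain K where K: "\<iota> K = Max (range \<iota>)" using Max_in[OF fin] by auto
  have const: "\<iota> k = \<iota> K" if "K \<le> k" for k
    using \<iota>mono[OF that] K fin by (metis Max_ge UNIV_I image_eqI le_antisym)
  define v where "v = en (\<iota> K)"
  have tg: "tgt (DD k) = v" if "K \<le> k" for k unfolding tgt_def v_def using const[OF that] \<iota>_def by simp
  have vn: "v \<notin> DD k" if "K \<le> k" for k using \<iota>in[of k] const[OF that] unfolding v_def by simp
  define \<delta> where "\<delta> k = dist (W - DD k) (tt k) v" for k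
  have dec: "\<delta> (Suc k) < \<delta> k" if "K \<le> k" for k
  proof -
    have p: "Prp (DD k) (tt k) (PP k) (tt (Suc k))" using inv_prp by blast
    have "v \<notin> PP k" using vn[of "Suc k"] that by auto
    then show ?thesis using p tg[OF that] unfolding Prp_def \<delta>_def by simp
  qed
  have "\<delta> (K + i) + i \<le> \<delta> K" for i
  proof (induction i)
    case 0 then show ?case by simp
  next
    case (Suc i) then show ?case using dec[of "K + i"] by simp
  qed
  from this[of "Suc (\<delta> K)"] show False by simp
qed

definition Lk :: "nat \<Rightarrow> 'a list" where
  "Lk k = (SOME L. distinct L \<and> set L = PP k \<and> hd L = tt k \<and> (last L = tt k \<or> E (last L) (tt k)) \<and> successively (near 3) L)"

lemma Lk: "distinct (Lk k) \<and> set (Lk k) = PP k \<and> hd (Lk k) = tt k \<and> (last (Lk k) = tt k \<or> E (last (Lk k)) (tt k)) \<and> successively (near 3) (Lk k)"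
proof -
  have p: "Prp (DD k) (tt k) (PP k) (tt (Suc k))" using inv_prp by blast
  have "\<exists>L. distinct L \<and> set L = PP k \<and> hd L = tt k \<and> (last L = tt k \<or> E (last L) (tt k)) \<and> successively (near 3) L"
    using p unfolding Prp_def by (intro fin_ham) auto
  then show ?thesis unfolding Lk_def by (rule someI_ex)
qed

lemma Lk_ne: "Lk k \<noteq> []"
proof -
  have "tt k \<in> PP k" using inv_prp unfolding Prp_def by blast
  then show ?thesis using Lk[of k] by auto
qed

definition pre :: "nat \<Rightarrow> 'a list" where "pre k = concat (map Lk [0..<k])"

lemma pre_Suc: "pre (Suc k) = pre k @ Lk k" unfolding pre_def by simp

lemma pre_set: "set (pre k) = DD k"
  by (induction k) (auto simp: pre_Suc Lk pre_def)

lemma pre_props: "distinct (pre k) \<and> successively (near 3) (pre k) \<and> (pre k = [] \<or> near 2 (last (pre k)) (tt k)) \<and> k \<le> length (pre k)"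
proof (induction k)
  case 0 then show ?case by (simp add: pre_def)
next
  case (Suc k)
  have p: "Prp (DD k) (tt k) (PP k) (tt (Suc k))" using inv_prp by blast
  have disj: "set (pre k) \<inter> set (Lk k) = {}" using p Lk[of k] pre_set[of k] unfolding Prp_def by auto
  have d: "distinct (pre (Suc k))" using Suc disj Lk[of k] by (simp add: pre_Suc)
  have l: "near 2 (last (pre (Suc k))) (tt (Suc k))"
  proof -
    have "near 1 (last (Lk k)) (tt k)" using Lk[of k] near_refl near_edge by metis
    moreover have "near 1 (tt k) (tt (Suc k))" using p near_edge unfolding Prp_def by auto
    ultimately have "near (1 + 1) (last (Lk k)) (tt (Suc k))" by (rule near_trans)
    then show ?thesis using Lk_ne by (simp add: pre_Suc numeral_2_eq_2)
  qed
  have sc: "successively (near 3) (pre (Suc k))"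
  proof -
    have "pre k = [] \<or> near 3 (last (pre k)) (hd (Lk k))"
      using Suc Lk[of k] near_mono[of 2 _ _ 3] by auto
    then show ?thesis using Suc Lk[of k] unfolding pre_Suc successively_append_iff by blast
  qed
  have "k \<le> length (pre k)" "0 < length (Lk k)" using Suc Lk_ne[of k] by auto
  then have "Suc k \<le> length (pre (Suc k))" unfolding pre_Suc length_append by linarith
  then show ?case using d l sc by simp
qed

lemma pre_prefix: "k \<le> k' \<Longrightarrow> \<exists>ys. pre k' = pre k @ ys"
proof (induction k' rule: dec_induct)
  case base then show ?case by simp
next
  case (step n) then show ?case by (auto simp: pre_Suc)
qed

definition gg :: "nat \<Rightarrow> 'a" where "gg n = pre (Suc n) ! n"

lemma gg_idx: "n < length (pre k) \<Longrightarrow> gg n = pre k ! n"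
proof -
  assume a: "n < length (pre k)"
  have b: "n < length (pre (Suc n))" using pre_props[of "Suc n"] by simp
  show ?thesis
  proof (cases "k \<le> Suc n")
    case True
    then obtain ys where "pre (Suc n) = pre k @ ys" using pre_prefix by blast
    then show ?thesis using a unfolding gg_def by (simp add: nth_append)
  next
    case False
    then obtain ys where "pre k = pre (Suc n) @ ys" using pre_prefix[of "Suc n" k] by auto
    then show ?thesis using b unfolding gg_def by (simp add: nth_append)
  qed
qed

lemma ray_seq: "\<exists>g. bij_betw g UNIV W \<and> g 0 = s \<and> (\<forall>n. near 3 (g n) (g (Suc n)))"
proof (intro exI[of _ gg] conjI allI)
  have inj: "inj gg"
  proof (rule injI)
    fix a b assume "gg a = gg b"
    define k where "k = Suc (Suc (max a b))"
    have l: "a < length (pre k)" "b < length (pre k)" using pre_props[of k] unfolding k_def by auto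
    then have "pre k ! a = pre k ! b" using \<open>gg a = gg b\<close> gg_idx by simp
    then show "a = b" using pre_props[of k] l by (simp add: nth_eq_iff_index_eq)
  qed
  have "range gg = W"
  proof
    show "range gg \<subseteq> W"
    proof
      fix w assume "w \<in> range gg"
      then obtain n where "w = gg n" by auto
      then have "w \<in> set (pre (Suc n))" unfolding gg_def using pre_props[of "Suc n"] by simp
      then show "w \<in> W" using pre_set inv_prp[of "Suc n"] unfolding Inv_def by auto
    qed
    show "W \<subseteq> range gg"
    proof
      fix w assume "w \<in> W"
      then obtain k where "w \<in> DD k" using cover by blast
      then have "w \<in> set (pre k)" using pre_set by simp
      then obtain n where "n < length (pre k)" "pre k ! n = w" by (metis in_set_conv_nth)
      then show "w \<in> range gg" using gg_idx by (metis rangeI)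
    qed
  qed
  then show "bij_betw gg UNIV W" using inj unfolding bij_betw_def by simp
  show "gg 0 = s"
  proof -
    have "pre (Suc 0) = Lk 0" by (simp add: pre_def)
    then have "gg 0 = hd (Lk 0)" unfolding gg_def using Lk_ne by (simp add: hd_conv_nth)
    then show ?thesis using Lk[of 0] by simp
  qed
  fix n
  have l: "Suc n < length (pre (Suc (Suc n)))" using pre_props[of "Suc (Suc n)"] by simp
  have "near 3 (pre (Suc (Suc n)) ! n) (pre (Suc (Suc n)) ! Suc n)"
    using successively_nth[of "near 3" "pre (Suc (Suc n))" n] pre_props[of "Suc (Suc n)"] l by blast
  moreover have "gg n = pre (Suc (Suc n)) ! n" "gg (Suc n) = pre (Suc (Suc n)) ! Suc n"
    using gg_idx l by auto
  ultimately show "near 3 (gg n) (gg (Suc n))" by simp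
qed

end
end



context grph begin

lemma gdist_le: "near C x y \<Longrightarrow> gdist E x y \<le> C"
proof -
  assume "near C x y"
  then obtain n where "n \<le> C" "(E ^^ n) x y" unfolding near_def by blast
  then show ?thesis unfolding gdist_def using Least_le[of "\<lambda>n. (E ^^ n) x y" n] by linarith
qed

lemma glue:
  assumes g1: "bij_betw g1 UNIV W1" and g2: "bij_betw g2 UNIV W2"
    and part: "W1 \<union> W2 = V" "W1 \<inter> W2 = {}"
    and s1: "\<And>n. near K (g1 n) (g1 (Suc n))" and s2: "\<And>n. near K (g2 n) (g2 (Suc n))"
    and j: "near K (g2 0) (g1 0)"
  shows "\<exists>f::int \<Rightarrow> 'a. bij_betw f UNIV V \<and> (\<forall>z. near K (f z) (f (z + 1)))"
proof -
  define f where "f z = (if 0 \<le> z then g1 (nat z) else g2 (nat (- z - 1)))" for z :: int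
  have i1: "inj g1" "range g1 = W1" using g1 unfolding bij_betw_def by auto
  have i2: "inj g2" "range g2 = W2" using g2 unfolding bij_betw_def by auto
  have "inj f"
  proof (rule injI)
    fix a b assume fab: "f a = f b"
    show "a = b"
    proof (cases "0 \<le> a"; cases "0 \<le> b")
      assume "0 \<le> a" "0 \<le> b"
      then have "g1 (nat a) = g1 (nat b)" using fab unfolding f_def by simp
      then show ?thesis using i1 \<open>0 \<le> a\<close> \<open>0 \<le> b\<close> by (metis injD nat_eq_iff2)
    next
      assume "\<not> 0 \<le> a" "\<not> 0 \<le> b"
      then have "g2 (nat (- a - 1)) = g2 (nat (- b - 1))" using fab unfolding f_def by simp
      then have "nat (- a - 1) = nat (- b - 1)" using i2 by (meson injD)
      then show ?thesis using \<open>\<not> 0 \<le> a\<close> \<open>\<not> 0 \<le> b\<close> by simp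
    next
      assume "0 \<le> a" "\<not> 0 \<le> b"
      then have "g1 (nat a) = g2 (nat (- b - 1))" using fab unfolding f_def by simp
      then show ?thesis using i1 i2 part by (metis IntI empty_iff rangeI)
    next
      assume "\<not> 0 \<le> a" "0 \<le> b"
      then have "g2 (nat (- a - 1)) = g1 (nat b)" using fab unfolding f_def by simp
      then show ?thesis using i1 i2 part by (metis IntI empty_iff rangeI)
    qed
  qed
  moreover have "range f = V"
  proof
    show "range f \<subseteq> V" using i1 i2 part unfolding f_def by auto
    show "V \<subseteq> range f"
    proof
      fix v assume "v \<in> V"
      then have "v \<in> W1 \<or> v \<in> W2" using part by auto
      then show "v \<in> range f"
      proof
        assume "v \<in> W1"
        then obtain n where "v = g1 n" using i1 by auto
        then have "v = f (int n)" unfolding f_def by simp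
        then show ?thesis by simp
      next
        assume "v \<in> W2"
        then obtain n where "v = g2 n" using i2 by auto
        then have "v = f (- int n - 1)" unfolding f_def by simp
        then show ?thesis by simp
      qed
    qed
  qed
  moreover have "near K (f z) (f (z + 1))" for z
  proof (cases "0 \<le> z")
    case True
    then have "nat (z + 1) = Suc (nat z)" by simp
    then show ?thesis using True s1[of "nat z"] unfolding f_def by simp
  next
    case False
    show ?thesis
    proof (cases "z = -1")
      case True then show ?thesis using j unfolding f_def by simp
    next
      case False
      then have "nat (- z - 1) = Suc (nat (- (z + 1) - 1))" "\<not> 0 \<le> z + 1" using \<open>\<not> 0 \<le> z\<close> by auto
      then show ?thesis using \<open>\<not> 0 \<le> z\<close> near_sym[OF s2[of "nat (- (z + 1) - 1)"]] unfolding f_def by simp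
    qed
  qed
  ultimately show ?thesis unfolding bij_betw_def by blast
qed

lemma act_from_f:
  assumes bij: "bij_betw f UNIV V" and st: "\<And>z::int. near K (f z) (f (z + 1))"
  shows "\<exists>act. translation_like V E act \<and> transitive_action V act"
proof -
  have injf: "inj f" and rf: "range f = V" using bij unfolding bij_betw_def by auto
  define iv where "iv = inv_into UNIV f"
  have fiv: "f (iv x) = x" if "x \<in> V" for x unfolding iv_def using rf that by (metis f_inv_into_f)
  have ivf: "iv (f i) = i" for i unfolding iv_def using injf by simp
  define act where "act x n = f (iv x + n)" for x n
  have fwd: "near (K * m) (f i) (f (i + int m))" for i m
  proof (induction m)
    case 0 then show ?case by (simp add: near_refl)
  next
    case (Suc m)
    have "near (K * m + K) (f i) (f (i + int m + 1))" using near_trans[OF Suc st[of "i + int m"]] .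
    moreover have e1: "K * Suc m = K * m + K" by simp
    moreover have e2: "i + int (Suc m) = i + int m + 1" by simp
    ultimately show ?case by (simp only: e1 e2)
  qed
  have bnd: "near (K * nat \<bar>n\<bar>) (f i) (f (i + n))" for i n
  proof (cases "0 \<le> n")
    case True then show ?thesis using fwd[where i=i and m="nat n"] by simp
  next
    case False
    have "near (K * nat \<bar>n\<bar>) (f (i + n)) (f (i + n + int (nat \<bar>n\<bar>)))" by (rule fwd)
    moreover have "i + n + int (nat \<bar>n\<bar>) = i" using False by simp
    ultimately show ?thesis using near_sym by simp
  qed
  have "int_right_action V act"
    unfolding int_right_action_def act_def using rf ivf fiv by (auto simp: add.assoc)
  moreover have "\<forall>x\<in>V. \<forall>n. act x n = x \<longrightarrow> n = 0"
  proof (intro ballI allI impI)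
    fix x n assume "x \<in> V" "act x n = x"
    then have "f (iv x + n) = f (iv x)" unfolding act_def using fiv by simp
    then have "iv x + n = iv x" by (rule injD[OF injf])
    then show "n = 0" by simp
  qed
  moreover have "\<forall>n. \<exists>C::nat. \<forall>x\<in>V. gdist E x (act x n) \<le> C"
  proof
    fix n
    show "\<exists>C::nat. \<forall>x\<in>V. gdist E x (act x n) \<le> C"
    proof (intro exI[of _ "K * nat \<bar>n\<bar>"] ballI)
      fix x assume "x \<in> V"
      have "near (K * nat \<bar>n\<bar>) (f (iv x)) (f (iv x + n))" by (rule bnd)
      then have "near (K * nat \<bar>n\<bar>) x (act x n)" using fiv[OF \<open>x \<in> V\<close>] unfolding act_def by simp
      then show "gdist E x (act x n) \<le> K * nat \<bar>n\<bar>" by (rule gdist_le)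
    qed
  qed
  moreover have "transitive_action V act"
    unfolding transitive_action_def
  proof (intro ballI)
    fix x y assume "x \<in> V" "y \<in> V"
    then have "act x (iv y - iv x) = y" unfolding act_def using fiv by simp
    then show "\<exists>n. act x n = y" by blast
  qed
  ultimately show ?thesis unfolding translation_like_def by blast
qed

lemma hard_dir:
  assumes gc: "graph_connected V E" and iV: "infinite V" and ne: "num_ends V E \<le> enat 2"
  shows "\<exists>act. translation_like V E act \<and> transitive_action V act"
proof -
  have "\<exists>f::int \<Rightarrow> 'a. bij_betw f UNIV V \<and> (\<forall>z. near 6 (f z) (f (z + 1)))"
  proof (cases "num_ends V E \<le> enat 1")
    case True
    have cV: "connU V"
      unfolding connU_def
    proof (intro ballI)
      fix a b assume "a \<in> V" "b \<in> V"
      then have "E\<^sup>*\<^sup>* a b" using gc unfolding graph_connected_def by auto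
      then show "conn V a b" unfolding conn_def
        by (rule mono_rtranclp[rule_format, rotated]) (auto simp: ER_def dest: E_V)
    qed
    interpret r: ray V E V using cV iV oneend_V[OF True] by unfold_locales auto
    obtain s where "s \<in> V" using iV by (metis ex_in_conv finite.emptyI)
    obtain g where g: "bij_betw g UNIV V" "\<And>n. near 3 (g n) (g (Suc n))"
      using r.ray_seq[OF \<open>s \<in> V\<close>] by blast
    have ig: "inj g" "range g = V" using g unfolding bij_betw_def by auto
    define W1 where "W1 = g ` {n. even n}"
    define W2 where "W2 = g ` {n. odd n}"
    have b1: "bij_betw (\<lambda>n. g (2 * n)) UNIV W1"
      unfolding bij_betw_def W1_def
    proof
      show "inj (\<lambda>n. g (2 * n))"
      proof (rule injI)
        fix a b :: nat assume "g (2 * a) = g (2 * b)"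
        then have "2 * a = 2 * b" by (rule injD[OF ig(1)])
        then show "a = b" by simp
      qed
      show "range (\<lambda>n. g (2 * n)) = g ` {n. even n}" by (auto elim!: evenE)
    qed
    have b2: "bij_betw (\<lambda>n. g (2 * n + 1)) UNIV W2"
      unfolding bij_betw_def W2_def
    proof
      show "inj (\<lambda>n. g (2 * n + 1))"
      proof (rule injI)
        fix a b :: nat assume "g (2 * a + 1) = g (2 * b + 1)"
        then have "2 * a + 1 = 2 * b + 1" by (rule injD[OF ig(1)])
        then show "a = b" by simp
      qed
      show "range (\<lambda>n. g (2 * n + 1)) = g ` {n. odd n}" by (auto elim!: oddE)
    qed
    have part: "W1 \<union> W2 = V" "W1 \<inter> W2 = {}"
      using ig unfolding W1_def W2_def by (auto simp: inj_eq)
    have two: "near 6 (g n) (g (Suc (Suc n)))" for n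
      using near_trans[OF g(2)[of n] g(2)[of "Suc n"]] by simp
    show ?thesis
    proof (rule glue[OF b1 b2 part])
      show "near 6 (g (2 * n)) (g (2 * Suc n))" for n using two[of "2 * n"] by simp
      show "near 6 (g (2 * n + 1)) (g (2 * Suc n + 1))" for n using two[of "2 * n + 1"] by simp
      show "near 6 (g (2 * 0 + 1)) (g (2 * 0))" using near_mono[OF near_sym[OF g(2)[of 0]]] by simp
    qed
  next
    case False
    obtain W1 W2 s1 s2 where w: "W1 \<union> W2 = V" "W1 \<inter> W2 = {}" "connU W1" "connU W2"
      "infinite W1" "infinite W2" "oneend W1" "oneend W2" "s1 \<in> W1" "s2 \<in> W2" "E s1 s2"
      using two_sides[OF gc ne False] by blast
    interpret r1: ray V E W1 using w by unfold_locales auto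
    interpret r2: ray V E W2 using w by unfold_locales auto
    obtain g1 where g1: "bij_betw g1 UNIV W1" "g1 0 = s1" "\<And>n. near 3 (g1 n) (g1 (Suc n))"
      using r1.ray_seq[OF w(9)] by blast
    obtain g2 where g2: "bij_betw g2 UNIV W2" "g2 0 = s2" "\<And>n. near 3 (g2 n) (g2 (Suc n))"
      using r2.ray_seq[OF w(10)] by blast
    show ?thesis
    proof (rule glue[OF g1(1) g2(1) w(1,2)])
      show "near 6 (g1 n) (g1 (Suc n))" for n using near_mono[OF g1(3)] by simp
      show "near 6 (g2 n) (g2 (Suc n))" for n using near_mono[OF g2(3)] by simp
      show "near 6 (g2 0) (g1 0)" using g1(2) g2(2) near_mono[OF near_edge[OF E_sym[OF w(11)]]] by simp
    qed
  qed
  then obtain f :: "int \<Rightarrow> 'a" where "bij_betw f UNIV V" "\<forall>z. near 6 (f z) (f (z + 1))" by blast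
  then show ?thesis using act_from_f by blast
qed

end



context grph begin

lemma easy_dir:
  assumes gc: "graph_connected V E" and iV: "infinite V"
    and tl: "translation_like V E act" and tr: "transitive_action V act"
  shows "num_ends V E \<le> enat 2"
proof -
  have cl: "\<And>x n. x \<in> V \<Longrightarrow> act x n \<in> V" and a0: "\<And>x. x \<in> V \<Longrightarrow> act x 0 = x"
    and aa: "\<And>x m n. x \<in> V \<Longrightarrow> act (act x m) n = act x (m + n)"
    using tl unfolding translation_like_def int_right_action_def by auto
  have free: "\<And>x n. x \<in> V \<Longrightarrow> act x n = x \<Longrightarrow> n = 0" using tl unfolding translation_like_def by auto
  obtain C where C: "\<forall>x\<in>V. gdist E x (act x 1) \<le> C" using tl unfolding translation_like_def by blast
  obtain x0 where x0: "x0 \<in> V" using iV by (metis ex_in_conv finite.emptyI)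
  define f where "f n = act x0 n" for n
  have fV: "f n \<in> V" for n unfolding f_def using cl x0 by auto
  have injf: "inj f"
  proof (rule injI)
    fix a b assume "f a = f b"
    then have "act (f a) (- a) = act (f b) (- a)" by simp
    then have "x0 = act x0 (b - a)" unfolding f_def using aa[OF x0] a0[OF x0] by simp
    then have "b - a = 0" using free[OF x0] by metis
    then show "a = b" by simp
  qed
  have surj: "\<exists>n. f n = y" if "y \<in> V" for y using tr x0 that unfolding transitive_action_def f_def by blast
  have nr: "near C x (act x 1)" if "x \<in> V" for x
  proof -
    have "E\<^sup>*\<^sup>* x (act x 1)" using gc that cl unfolding graph_connected_def by blast
    then obtain k where "(E ^^ k) x (act x 1)" by (auto simp: rtranclp_power)
    then have "(E ^^ gdist E x (act x 1)) x (act x 1)" unfolding gdist_def by (rule LeastI)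
    then show ?thesis unfolding near_def using C that by blast
  qed
  have fs: "near C (f n) (f (n + 1))" for n
  proof -
    have "f (n + 1) = act (f n) 1" unfolding f_def using aa[OF x0] by simp
    then show ?thesis using nr[OF fV[of n]] by simp
  qed
  show ?thesis unfolding num_ends_def
  proof (rule SUP_least)
    fix A assume "A \<in> {A. finite A \<and> (\<forall>(x, y)\<in>A. E x y)}"
    then have fA: "finite A" by auto
    define Er where "Er = remove_edges E A"
    have Ersym: "Er x y \<Longrightarrow> Er y x" for x y unfolding Er_def by (rule Er_sym)
    define F where "F = fst ` A \<union> snd ` A"
    define Bad where "Bad = (\<Union>y\<in>F. {x. near C y x})"
    have fBad: "finite Bad" unfolding Bad_def F_def using fA ball_fin by auto
    define Ib where "Ib = f -` Bad"
    have fIb: "finite Ib" unfolding Ib_def using fBad injf by (simp add: finite_vimageI)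
    define M where "M = Max (insert 0 (abs ` Ib))"
    define N where "N = M + 1"
    have Mge: "\<bar>z\<bar> \<le> M" if "z \<in> Ib" for z unfolding M_def using fIb that by (intro Max_ge) auto
    have "0 \<le> M" unfolding M_def using fIb by (intro Max_ge) auto
    then have N0: "0 < N" unfolding N_def by simp
    have good: "f z \<notin> Bad" if "N \<le> \<bar>z\<bar>" for z
      using Mge[of z] that unfolding Ib_def N_def by auto
    have walk: "Er\<^sup>*\<^sup>* x y" if "x \<notin> Bad" "(E ^^ k) x y" "k \<le> C" for x y k
      using that(2,3)
    proof (induction k arbitrary: y)
      case 0 then show ?case by simp
    next
      case (Suc k)
      obtain z where z: "(E ^^ k) x z" "E z y" using Suc.prems(1) by (auto elim: relpowp_Suc_E)
      have "Er\<^sup>*\<^sup>* x z" using Suc z by simp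
      have zF: "z \<notin> F"
      proof
        assume "z \<in> F"
        have "k \<le> C" using Suc.prems(2) by simp
        then have "near C z x" unfolding near_def using relpow_sym[OF z(1)] by blast
        then show False using that(1) \<open>z \<in> F\<close> unfolding Bad_def by auto
      qed
      have yF: "y \<notin> F"
      proof
        assume "y \<in> F"
        have "near C y x" unfolding near_def using relpow_sym[OF Suc.prems(1)] Suc.prems(2) by blast
        then show False using that(1) \<open>y \<in> F\<close> unfolding Bad_def by auto
      qed
      have "(z, y) \<notin> A" "(y, z) \<notin> A" using zF yF unfolding F_def by (auto simp: image_iff)
      then have "Er z y" using z unfolding Er_def remove_edges_def by auto
      with \<open>Er\<^sup>*\<^sup>* x z\<close> show ?case by (rule rtranclp.rtrancl_into_rtrancl)
    qed
    have ngood: "Er\<^sup>*\<^sup>* x y" if "x \<notin> Bad" "near C x y" for x y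
      using that walk unfolding near_def by blast
    have pos: "Er\<^sup>*\<^sup>* (f N) (f (N + int m))" for m
    proof (induction m)
      case 0 then show ?case by simp
    next
      case (Suc m)
      have "f (N + int m) \<notin> Bad" using good N0 by simp
      then have st: "Er\<^sup>*\<^sup>* (f (N + int m)) (f (N + int m + 1))" using fs ngood by blast
      have eq: "N + int (Suc m) = N + int m + 1" by simp
      have "Er\<^sup>*\<^sup>* (f N) (f (N + int m + 1))" by (rule rtranclp_trans[OF Suc.IH st])
      then show ?case unfolding eq .
    qed
    have neg: "Er\<^sup>*\<^sup>* (f (- N)) (f (- N - int m))" for m
    proof (induction m)
      case 0 then show ?case by simp
    next
      case (Suc m)
      have "f (- N - int m - 1) \<notin> Bad" using good N0 by simp
      then have "Er\<^sup>*\<^sup>* (f (- N - int m - 1)) (f (- N - int m - 1 + 1))" using fs ngood by blast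
      moreover have "- N - int m - 1 + 1 = - N - int m" by simp
      ultimately have "Er\<^sup>*\<^sup>* (f (- N - int m - 1)) (f (- N - int m))" by simp
      then have st: "Er\<^sup>*\<^sup>* (f (- N - int m)) (f (- N - int m - 1))" using sym_rtranclp[of Er, OF Ersym] by blast
      have eq: "- N - int (Suc m) = - N - int m - 1" by simp
      have "Er\<^sup>*\<^sup>* (f (- N)) (f (- N - int m - 1))" by (rule rtranclp_trans[OF Suc.IH st])
      then show ?case unfolding eq .
    qed
    have far: "Er\<^sup>*\<^sup>* (f N) (f z) \<or> Er\<^sup>*\<^sup>* (f (- N)) (f z)" if "N \<le> \<bar>z\<bar>" for z
    proof (cases "0 \<le> z")
      case True
      then have "z = N + int (nat (z - N))" using that by simp
      then show ?thesis using pos by metis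
    next
      case False
      then have "z = - N - int (nat (- N - z))" using that by simp
      then show ?thesis using neg by metis
    qed
    define cE where "cE u = {w. Er\<^sup>*\<^sup>* u w}" for u
    have cE_eq: "cE u = cE w" if "Er\<^sup>*\<^sup>* u w" for u w
    proof -
      have "Er\<^sup>*\<^sup>* w u" using sym_rtranclp[OF Ersym that] .
      then show ?thesis unfolding cE_def using that by (auto intro: rtranclp_trans)
    qed
    have cEV: "cE u \<subseteq> V" if "u \<in> V" for u
    proof
      fix w assume "w \<in> cE u"
      then have "Er\<^sup>*\<^sup>* u w" unfolding cE_def by auto
      then show "w \<in> V" using that
        by (induction rule: rtranclp_induct) (auto simp: Er_def remove_edges_def dest: E_V)
    qed
    have sub: "{C0 \<in> components V Er. infinite C0} \<subseteq> {cE (f N), cE (f (- N))}"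
    proof
      fix C0 assume "C0 \<in> {C0 \<in> components V Er. infinite C0}"
      then obtain x where x: "x \<in> V" "C0 = cE x" "infinite (cE x)"
        unfolding components_def cE_def by auto
      have "finite {z::int. \<bar>z\<bar> < N}" by (rule finite_subset[of _ "{-N..N}"]) auto
      then have "finite (f ` {z. \<bar>z\<bar> < N})" by simp
      then have "\<not> cE x \<subseteq> f ` {z. \<bar>z\<bar> < N}" using x(3) finite_subset by blast
      then obtain w where w: "w \<in> cE x" "w \<notin> f ` {z. \<bar>z\<bar> < N}" by blast
      have "w \<in> V" using w cEV x by auto
      then obtain z where "f z = w" using surj by blast
      then have "N \<le> \<bar>z\<bar>" using w by force
      have xw: "Er\<^sup>*\<^sup>* x w" using w unfolding cE_def by auto
      from far[OF \<open>N \<le> \<bar>z\<bar>\<close>] show "C0 \<in> {cE (f N), cE (f (- N))}"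
      proof
        assume "Er\<^sup>*\<^sup>* (f N) (f z)"
        then have "Er\<^sup>*\<^sup>* w (f N)" using \<open>f z = w\<close> sym_rtranclp[of Er, OF Ersym] by blast
        then have "Er\<^sup>*\<^sup>* x (f N)" using xw by (rule rtranclp_trans[rotated])
        then show ?thesis using cE_eq x by auto
      next
        assume "Er\<^sup>*\<^sup>* (f (- N)) (f z)"
        then have "Er\<^sup>*\<^sup>* w (f (- N))" using \<open>f z = w\<close> sym_rtranclp[of Er, OF Ersym] by blast
        then have "Er\<^sup>*\<^sup>* x (f (- N))" using xw by (rule rtranclp_trans[rotated])
        then show ?thesis using cE_eq x by auto
      qed
    qed
    have "card {cE (f N), cE (f (- N))} \<le> 2" by (simp add: card_insert_le_m1)
    then have "finite {C0 \<in> components V Er. infinite C0} \<and> card {C0 \<in> components V Er. infinite C0} \<le> 2"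
      using sub by (meson card_mono finite.emptyI finite.insertI finite_subset le_trans)
    then show "ecard {C0 \<in> components V (remove_edges E A). infinite C0} \<le> enat 2"
      unfolding ecard_def Er_def by simp
  qed
qed

end

theorem corollary3p4:
  fixes V :: "'a set" and E :: "'a \<Rightarrow> 'a \<Rightarrow> bool"
  assumes "simple_graph V E" and "graph_connected V E" and "infinite V"
    and "bounded_degree V E"
  shows "(\<exists>act. translation_like V E act \<and> transitive_action V act) \<longleftrightarrow> num_ends V E \<le> 2"
proof -
  interpret grph V E using assms by unfold_locales
  have two: "(2::enat) = enat 2" by (simp add: numeral_eq_enat)
  show ?thesis unfolding two using easy_dir hard_dir assms by blast
qed


end
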